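(* In any tree $T=(V,E)$, $$n_T(\mathcal{L}_5)=\frac12\sum_{st\in E}\big(g_2(s,t)+g_2(t,s)\big),\qquad g_2(s,t)=(k_t-1)(\xi(s)-k_t-k_s+1).$$
   Context: $k_x$ is the degree of $x$, $\xi(s)=\sum_{t\in\Gamma(s)}k_t$ the sum of the degrees of the neighbours of $s$. $\mathcal{L}_5$ is the path on 5 vertices and $n_T(\mathcal{L}_5)$ the number of subgraphs of $T$ isomorphic to it. *)

theory Defs
  imports Complex_Main
begin

definition simple_graph :: "'a set \<Rightarrow> 'a set set \<Rightarrow> bool" where
  "simple_graph V E \<longleftrightarrow> finite V \<and>
     (\<forall>e\<in>E. \<exists>u v. u \<in> V \<and> v \<in> V \<and> u \<noteq> v \<and> e = {u, v})"

definition walk :: "'a set set \<Rightarrow> 'a list \<Rightarrow> bool" where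
  "walk E xs \<longleftrightarrow> xs \<noteq> [] \<and> (\<forall>i. Suc i < length xs \<longrightarrow> {xs ! i, xs ! Suc i} \<in> E)"

definition connected_graph :: "'a set \<Rightarrow> 'a set set \<Rightarrow> bool" where
  "connected_graph V E \<longleftrightarrow>
     (\<forall>u\<in>V. \<forall>v\<in>V. \<exists>xs. walk E xs \<and> hd xs = u \<and> last xs = v)"

definition is_cycle :: "'a set set \<Rightarrow> 'a list \<Rightarrow> bool" where
  "is_cycle E xs \<longleftrightarrow> length xs \<ge> 3 \<and> distinct xs \<and> walk E xs \<and> {last xs, hd xs} \<in> E"

definition tree :: "'a set \<Rightarrow> 'a set set \<Rightarrow> bool" where
  "tree V E \<longleftrightarrow> simple_graph V E \<and> V \<noteq> {} \<and> connected_graph V E \<and> \<not> (\<exists>xs. is_cycle E xs)"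

definition nbrs :: "'a set \<Rightarrow> 'a set set \<Rightarrow> 'a \<Rightarrow> 'a set" where
  "nbrs V E s = {t \<in> V. {s, t} \<in> E}"

definition deg :: "'a set \<Rightarrow> 'a set set \<Rightarrow> 'a \<Rightarrow> nat" where
  "deg V E x = card (nbrs V E x)"

definition xi :: "'a set \<Rightarrow> 'a set set \<Rightarrow> 'a \<Rightarrow> nat" where
  "xi V E s = (\<Sum>t\<in>nbrs V E s. deg V E t)"

definition g2 :: "'a set \<Rightarrow> 'a set set \<Rightarrow> 'a \<Rightarrow> 'a \<Rightarrow> real" where
  "g2 V E s t = (real (deg V E t) - 1) *
                (real (xi V E s) - real (deg V E t) - real (deg V E s) + 1)"

text \<open>Number of subgraphs isomorphic to the path L_5 on 5 vertices: such a subgraph is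
  determined by its edge set {v0v1, v1v2, v2v3, v3v4} with v0..v4 distinct vertices.\<close>
definition n_L5 :: "'a set \<Rightarrow> 'a set set \<Rightarrow> nat" where
  "n_L5 V E = card {F. F \<subseteq> E \<and>
     (\<exists>xs. length xs = 5 \<and> distinct xs \<and> set xs \<subseteq> V \<and>
           F = {{xs ! i, xs ! Suc i} | i. i < 4})}"

end

theory Submission
  imports Defs
begin


lemma len5: "length xs = 5 \<Longrightarrow> \<exists>a b c d e. xs = [a,b,c,d,e]"
  by (cases xs; cases "tl xs"; cases "tl (tl xs)"; cases "tl (tl (tl xs))";
      cases "tl (tl (tl (tl xs)))"; auto)

definition es :: "'a list \<Rightarrow> 'a set set" where
  "es xs = {{xs ! i, xs ! Suc i} | i. i < 4}"

lemma es5: "es [a,b,c,d,e] = {{a,b},{b,c},{c,d},{d,e}}"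
proof -
  have "{i. i < (4::nat)} = {0,1,2,3}" by auto
  then show ?thesis unfolding es_def Setcompr_eq_image[of _ "{i. i<4}", simplified]
    by (simp add: numeral_eq_Suc)
qed

lemma walk3: "walk E [x,y,z] \<longleftrightarrow> {x,y} \<in> E \<and> {y,z} \<in> E"
  by (auto simp: walk_def less_Suc_eq nth_Cons split: nat.splits)

lemma walk4: "walk E [x,y,z,w] \<longleftrightarrow> {x,y} \<in> E \<and> {y,z} \<in> E \<and> {z,w} \<in> E"
  by (auto simp: walk_def less_Suc_eq nth_Cons split: nat.splits)

lemma uniq:
  assumes D: "distinct [a,b,c,d,e]" and D': "distinct [a',b',c',d',e']"
   and F: "{{a,b},{b,c},{c,d},{d,e}} = {{a',b'},{b',c'},{c',d'},{d',e'::'a}}"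
  shows "[a',b',c',d',e'] = [a,b,c,d,e] \<or> [a',b',c',d',e'] = [e,d,c,b,a]"
proof -
  have m1: "{a',b'} \<in> {{a,b},{b,c},{c,d},{d,e}}" and m2: "{b',c'} \<in> {{a,b},{b,c},{c,d},{d,e}}"
    and m3: "{c',d'} \<in> {{a,b},{b,c},{c,d},{d,e}}" and m4: "{d',e'} \<in> {{a,b},{b,c},{c,d},{d,e}}"
    unfolding F by simp_all
  from m1 have "(a'=a\<and>b'=b) \<or> (a'=b\<and>b'=a) \<or> (a'=b\<and>b'=c) \<or> (a'=c\<and>b'=b) \<or>
     (a'=c\<and>b'=d) \<or> (a'=d\<and>b'=c) \<or> (a'=d\<and>b'=e) \<or> (a'=e\<and>b'=d)"
    by (simp add: doubleton_eq_iff)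
  then show ?thesis
  proof (elim disjE conjE)
    assume h: "a'=a" "b'=b"
    have c: "c'=c" using m2 D D' h by (auto simp: doubleton_eq_iff)
    have d: "d'=d" using m3 D D' h c by (auto simp: doubleton_eq_iff)
    have "e'=e" using m4 D D' h c d by (auto simp: doubleton_eq_iff)
    then show ?thesis using h c d by simp
  next
    assume h: "a'=b" "b'=a"
    show ?thesis using m2 D D' h by (auto simp: doubleton_eq_iff)
  next
    assume h: "a'=b" "b'=c"
    have c: "c'=d" using m2 D D' h by (auto simp: doubleton_eq_iff)
    have d: "d'=e" using m3 D D' h c by (auto simp: doubleton_eq_iff)
    show ?thesis using m4 D D' h c d by (auto simp: doubleton_eq_iff)
  next
    assume h: "a'=c" "b'=b"
    have c: "c'=a" using m2 D D' h by (auto simp: doubleton_eq_iff)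
    show ?thesis using m3 D D' h c by (auto simp: doubleton_eq_iff)
  next
    assume h: "a'=c" "b'=d"
    have c: "c'=e" using m2 D D' h by (auto simp: doubleton_eq_iff)
    show ?thesis using m3 D D' h c by (auto simp: doubleton_eq_iff)
  next
    assume h: "a'=d" "b'=c"
    have c: "c'=b" using m2 D D' h by (auto simp: doubleton_eq_iff)
    have d: "d'=a" using m3 D D' h c by (auto simp: doubleton_eq_iff)
    show ?thesis using m4 D D' h c d by (auto simp: doubleton_eq_iff)
  next
    assume h: "a'=d" "b'=e"
    show ?thesis using m2 D D' h by (auto simp: doubleton_eq_iff)
  next
    assume h: "a'=e" "b'=d"
    have c: "c'=c" using m2 D D' h by (auto simp: doubleton_eq_iff)
    have d: "d'=b" using m3 D D' h c by (auto simp: doubleton_eq_iff)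
    have "e'=a" using m4 D D' h c d by (auto simp: doubleton_eq_iff)
    then show ?thesis using h c d by simp
  qed

qed



lemma edgeV: "simple_graph V E \<Longrightarrow> {x,y} \<in> E \<Longrightarrow> x \<in> V \<and> y \<in> V \<and> x \<noteq> y"
  unfolding simple_graph_def by (metis doubleton_eq_iff)

lemma no_tri:
  assumes "tree V E" "{x,y} \<in> E" "{y,z} \<in> E" "{z,x} \<in> E" "x \<noteq> z"
  shows False
proof -
  have sg: "simple_graph V E" using assms(1) by (simp add: tree_def)
  have "is_cycle E [x,y,z]" unfolding is_cycle_def using assms(2-5) edgeV[OF sg]
    by (auto simp: walk3)
  then show False using assms(1) by (auto simp: tree_def)
qed

lemma no_sq:
  assumes "tree V E" "{x,y} \<in> E" "{y,z} \<in> E" "{z,w} \<in> E" "{w,x} \<in> E" "x \<noteq> z" "y \<noteq> w"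
  shows False
proof -
  have sg: "simple_graph V E" using assms(1) by (simp add: tree_def)
  have "is_cycle E [x,y,z,w]" unfolding is_cycle_def using assms(2-7) edgeV[OF sg]
    by (auto simp: walk4)
  then show False using assms(1) by (auto simp: tree_def)
qed



definition P5 :: "'a set set \<Rightarrow> 'a list set" where
  "P5 E = {[a,b,c,d,e] | a b c d e. distinct [a,b,c,d,e] \<and> {a,b} \<in> E \<and> {b,c} \<in> E \<and> {c,d} \<in> E \<and> {d,e} \<in> E}"

lemma finite_P5: assumes "simple_graph V E" shows "finite (P5 E)"
proof -
  have "P5 E \<subseteq> {xs. set xs \<subseteq> V \<and> length xs = 5}"
  proof
    fix xs assume "xs \<in> P5 E"
    then obtain a b c d e where x: "xs = [a,b,c,d,e]"
     "{a,b} \<in> E" "{b,c} \<in> E" "{c,d} \<in> E" "{d,e} \<in> E"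
      unfolding P5_def by blast
    have "a \<in> V" "b \<in> V" "c \<in> V" "d \<in> V" "e \<in> V"
      using edgeV[OF assms x(2)] edgeV[OF assms x(3)] edgeV[OF assms x(4)] edgeV[OF assms x(5)]
      by auto
    then show "xs \<in> {xs. set xs \<subseteq> V \<and> length xs = 5}" using x by simp
  qed
  moreover have "finite V" using assms by (simp add: simple_graph_def)
  ultimately show ?thesis using finite_lists_length_eq finite_subset by blast
qed

lemma Fset_eq:
  assumes "simple_graph V E"
  shows "{F. F \<subseteq> E \<and> (\<exists>xs. length xs = 5 \<and> distinct xs \<and> set xs \<subseteq> V \<and>
           F = {{xs ! i, xs ! Suc i} | i. i < 4})} = es ` P5 E"
proof (intro equalityI subsetI)
  fix F assume "F \<in> {F. F \<subseteq> E \<and> (\<exists>xs. length xs = 5 \<and> distinct xs \<and> set xs \<subseteq> V \<and>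
           F = {{xs ! i, xs ! Suc i} | i. i < 4})}"
  then obtain xs where F: "F \<subseteq> E" "length xs = 5" "distinct xs" "F = es xs"
    unfolding es_def by blast
  then obtain a b c d e where x: "xs = [a,b,c,d,e]" using len5 by blast
  have "xs \<in> P5 E" using F unfolding x es5 P5_def by auto
  then show "F \<in> es ` P5 E" using F by blast
next
  fix F assume "F \<in> es ` P5 E"
  then obtain a b c d e where x: "F = es [a,b,c,d,e]" "distinct [a,b,c,d,e]"
     "{a,b} \<in> E" "{b,c} \<in> E" "{c,d} \<in> E" "{d,e} \<in> E"
    unfolding P5_def by blast
  show "F \<in> {F. F \<subseteq> E \<and> (\<exists>xs. length xs = 5 \<and> distinct xs \<and> set xs \<subseteq> V \<and>
           F = {{xs ! i, xs ! Suc i} | i. i < 4})}"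
  proof (simp only: mem_Collect_eq, intro conjI exI[of _ "[a,b,c,d,e]"])
    show "F \<subseteq> E" using x by (simp add: es5)
    show "length [a,b,c,d,e] = 5" by simp
    show "distinct [a,b,c,d,e]" by (rule x(2))
    show "F = {{[a,b,c,d,e] ! i, [a,b,c,d,e] ! Suc i} | i. i < 4}" using x(1) by (simp add: es_def)
    have "a \<in> V" "b \<in> V" "c \<in> V" "d \<in> V" "e \<in> V"
      using edgeV[OF assms x(3)] edgeV[OF assms x(4)] edgeV[OF assms x(5)] edgeV[OF assms x(6)]
      by auto
    then show "set [a,b,c,d,e] \<subseteq> V" by simp
  qed
qed

lemma fiber:
  assumes "xs \<in> P5 E"
  shows "{ys \<in> P5 E. es ys = es xs} = {xs, rev xs}"
proof -
  obtain a b c d e where x: "xs = [a,b,c,d,e]" "distinct [a,b,c,d,e]"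
     "{a,b} \<in> E" "{b,c} \<in> E" "{c,d} \<in> E" "{d,e} \<in> E"
    using assms unfolding P5_def by blast
  have r: "rev xs \<in> P5 E" using x unfolding P5_def by (auto simp: insert_commute)
  have er: "es (rev xs) = es xs" using x by (auto simp: es5 insert_commute)
  show ?thesis
  proof (intro equalityI subsetI)
    fix ys assume "ys \<in> {ys \<in> P5 E. es ys = es xs}"
    then obtain a' b' c' d' e' where y: "ys = [a',b',c',d',e']" "distinct [a',b',c',d',e']"
      "es ys = es xs" unfolding P5_def by blast
    have "ys = xs \<or> ys = [e,d,c,b,a]"
      using uniq[OF x(2) y(2)] y(3) unfolding x(1) y(1) es5 by metis
    then show "ys \<in> {xs, rev xs}" using x by auto
  next
    fix ys assume "ys \<in> {xs, rev xs}"
    then show "ys \<in> {ys \<in> P5 E. es ys = es xs}" using assms r er by auto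
  qed
qed

lemma card_fiber:
  assumes "xs \<in> P5 E"
  shows "card {ys \<in> P5 E. es ys = es xs} = 2"
proof -
  obtain a b c d e where x: "xs = [a,b,c,d,e]" "distinct [a,b,c,d,e]"
    using assms unfolding P5_def by blast
  have "xs \<noteq> rev xs" using x by auto
  then show ?thesis unfolding fiber[OF assms] by simp
qed

lemma card_P5_es:
  assumes "simple_graph V E"
  shows "card (P5 E) = 2 * card (es ` P5 E)"
proof -
  have "card (P5 E) = (\<Sum>F\<in>es ` P5 E. card {ys \<in> P5 E. es ys = F})"
    unfolding card_eq_sum using sum.image_gen[OF finite_P5[OF assms], of "\<lambda>_. 1::nat" es] by simp
  also have "\<dots> = (\<Sum>F\<in>es ` P5 E. 2)"
    by (rule sum.cong) (auto simp: card_fiber)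
  finally show ?thesis by simp
qed



lemma nbr_iff: "simple_graph V E \<Longrightarrow> t \<in> nbrs V E s \<longleftrightarrow> {s,t} \<in> E"
  unfolding nbrs_def using edgeV[of V E s t] by blast

lemma finite_nbrs: "simple_graph V E \<Longrightarrow> finite (nbrs V E s)"
  unfolding nbrs_def simple_graph_def by auto

definition Aset :: "'a set set \<Rightarrow> 'a \<Rightarrow> 'a \<Rightarrow> 'a list set" where
  "Aset E s t = {xs \<in> P5 E. xs ! 1 = t \<and> xs ! 2 = s}"

lemma A_eq:
  assumes T: "tree V E" and st: "{s,t} \<in> E"
  shows "Aset E s t = (\<lambda>(v0,u,w). [v0,t,s,u,w]) `
     ((nbrs V E t - {s}) \<times> (SIGMA u:nbrs V E s - {t}. nbrs V E u - {s}))"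
proof -
  have sg: "simple_graph V E" using T by (simp add: tree_def)
  note N = nbr_iff[OF sg]
  show ?thesis
  proof (intro equalityI subsetI)
    fix xs assume "xs \<in> Aset E s t"
    then obtain a b c d e where x: "xs = [a,b,c,d,e]" "distinct [a,b,c,d,e]"
     "{a,b} \<in> E" "{b,c} \<in> E" "{c,d} \<in> E" "{d,e} \<in> E" "b = t" "c = s"
      unfolding P5_def Aset_def by auto
    have "(a,d,e) \<in> (nbrs V E t - {s}) \<times> (SIGMA u:nbrs V E s - {t}. nbrs V E u - {s})"
      using x by (auto simp: N insert_commute)
    then show "xs \<in> (\<lambda>(v0,u,w). [v0,t,s,u,w]) `
     ((nbrs V E t - {s}) \<times> (SIGMA u:nbrs V E s - {t}. nbrs V E u - {s}))"
      using x by force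
  next
    fix xs assume "xs \<in> (\<lambda>(v0,u,w). [v0,t,s,u,w]) `
     ((nbrs V E t - {s}) \<times> (SIGMA u:nbrs V E s - {t}. nbrs V E u - {s}))"
    then obtain p where p: "p \<in> (nbrs V E t - {s}) \<times> (SIGMA u:nbrs V E s - {t}. nbrs V E u - {s})"
      "xs = (\<lambda>(v0,u,w). [v0,t,s,u,w]) p" by blast
    obtain a d e where pe: "p = (a,d,e)" by (cases p) auto
    have x: "xs = [a,t,s,d,e]" "{t,a} \<in> E" "a \<noteq> s" "{s,d} \<in> E" "d \<noteq> t"
      "{d,e} \<in> E" "e \<noteq> s"
      using p unfolding pe by (simp_all add: N)
    have ta: "t \<noteq> a" using edgeV[OF sg x(2)] by simp
    have ts: "t \<noteq> s" using edgeV[OF sg st] by auto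
    have sd: "s \<noteq> d" using edgeV[OF sg x(4)] by simp
    have de: "d \<noteq> e" using edgeV[OF sg x(6)] by simp
    have ad: "a \<noteq> d"
    proof
      assume "a = d"
      then show False using no_tri[OF T, of t s d] st x ts by (auto simp: insert_commute)
    qed
    have te: "t \<noteq> e"
    proof
      assume "t = e"
      then show False using no_tri[OF T, of t s d] st x ts by (auto simp: insert_commute)
    qed
    have ae: "a \<noteq> e"
    proof
      assume "a = e"
      then show False using no_sq[OF T, of a t s d] st x ad ts by (auto simp: insert_commute)
    qed
    have "distinct [a,t,s,d,e]" using ta ts sd de ad te ae x by auto
    then show "xs \<in> Aset E s t" unfolding Aset_def P5_def using x st
      by (auto simp: insert_commute)
  qed
qed

lemma card_A:
  assumes T: "tree V E" and st: "{s,t} \<in> E"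
  shows "card (Aset E s t) = (deg V E t - 1) * (\<Sum>u\<in>nbrs V E s - {t}. deg V E u - 1)"
proof -
  have sg: "simple_graph V E" using T by (simp add: tree_def)
  note N = nbr_iff[OF sg]
  have inj: "inj_on (\<lambda>(v0,u,w). [v0,t,s,u,w])
     ((nbrs V E t - {s}) \<times> (SIGMA u:nbrs V E s - {t}. nbrs V E u - {s}))"
    by (auto simp: inj_on_def)
  have c1: "card (nbrs V E t - {s}) = deg V E t - 1"
    using st by (simp add: deg_def N insert_commute)
  have c2: "card (nbrs V E u - {s}) = deg V E u - 1" if "u \<in> nbrs V E s - {t}" for u
    using that by (simp add: deg_def N insert_commute)
  have "card (SIGMA u:nbrs V E s - {t}. nbrs V E u - {s}) = (\<Sum>u\<in>nbrs V E s - {t}. card (nbrs V E u - {s}))"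
    using finite_nbrs[OF sg] by (simp)
  also have "\<dots> = (\<Sum>u\<in>nbrs V E s - {t}. deg V E u - 1)"
    using c2 by (rule sum.cong[OF refl])
  finally show ?thesis
    unfolding A_eq[OF T st] card_image[OF inj] card_cartesian_product c1 by simp
qed

lemma real_card_A:
  assumes T: "tree V E" and st: "{s,t} \<in> E"
  shows "real (card (Aset E s t)) = g2 V E s t"
proof -
  have sg: "simple_graph V E" using T by (simp add: tree_def)
  note N = nbr_iff[OF sg]
  have fin: "finite (nbrs V E s)" using finite_nbrs[OF sg] .
  have tN: "t \<in> nbrs V E s" using st N by simp
  have dt: "deg V E t \<ge> 1"
  proof -
    have "s \<in> nbrs V E t" using st N by (simp add: insert_commute)
    then show ?thesis unfolding deg_def using finite_nbrs[OF sg, of t]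
      by (metis One_nat_def Suc_leI card_gt_0_iff empty_iff)
  qed
  have du: "deg V E u \<ge> 1" if "u \<in> nbrs V E s" for u
  proof -
    have "s \<in> nbrs V E u" using that N by (simp add: insert_commute)
    then show ?thesis unfolding deg_def using finite_nbrs[OF sg, of u]
      by (metis One_nat_def Suc_leI card_gt_0_iff empty_iff)
  qed
  have "real (\<Sum>u\<in>nbrs V E s - {t}. deg V E u - 1) = (\<Sum>u\<in>nbrs V E s - {t}. real (deg V E u) - 1)"
    unfolding of_nat_sum using du by (intro sum.cong) (auto simp: of_nat_diff)
  also have "\<dots> = (\<Sum>u\<in>nbrs V E s - {t}. real (deg V E u)) - real (card (nbrs V E s - {t}))"
    by (simp add: sum_subtractf)
  also have "(\<Sum>u\<in>nbrs V E s - {t}. real (deg V E u)) = real (xi V E s) - real (deg V E t)"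
    unfolding xi_def of_nat_sum using sum.remove[OF fin tN, of "\<lambda>u. real (deg V E u)"] by simp
  also have "real (card (nbrs V E s - {t})) = real (deg V E s) - 1"
  proof -
    have "card (nbrs V E s) \<ge> 1" using tN fin
      by (metis One_nat_def Suc_leI card_gt_0_iff empty_iff)
    then show ?thesis using tN fin by (simp add: deg_def of_nat_diff)
  qed
  finally have "real (\<Sum>u\<in>nbrs V E s - {t}. deg V E u - 1) =
      real (xi V E s) - real (deg V E t) - real (deg V E s) + 1" by simp
  then show ?thesis unfolding card_A[OF T st] g2_def of_nat_mult using dt by (simp add: of_nat_diff)
qed



theorem proposition18:
  fixes V :: "'a set" and E :: "'a set set"
  assumes "tree V E"
  shows "real (n_L5 V E) =
    1/2 * (\<Sum>e\<in>E. \<Sum>(s, t)\<in>{(s, t). e = {s, t}}. g2 V E s t)"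
proof -
  note T = assms
  have sg: "simple_graph V E" using T by (simp add: tree_def)
  define D where "D = {(s,t). {s,t} \<in> E}"
  have finD: "finite D"
  proof (rule finite_subset)
    show "D \<subseteq> V \<times> V"
    proof
      fix p assume "p \<in> D"
      then obtain s t where "p = (s,t)" "{s,t} \<in> E" unfolding D_def by auto
      then show "p \<in> V \<times> V" using edgeV[OF sg, of s t] by simp
    qed
    show "finite (V \<times> V)" using sg by (simp add: simple_graph_def)
  qed
  have n: "n_L5 V E = card (es ` P5 E)" unfolding n_L5_def Fset_eq[OF sg] ..
  have img: "(\<lambda>xs. (xs ! 2, xs ! 1)) ` P5 E \<subseteq> D"
    unfolding P5_def D_def by (auto simp: insert_commute)
  have "card (P5 E) = (\<Sum>p\<in>D. \<Sum>xs\<in>{xs \<in> P5 E. (xs ! 2, xs ! 1) = p}. (1::nat))"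
    unfolding card_eq_sum using sum.group[OF finite_P5[OF sg] finD img, of "\<lambda>_. 1::nat"] by simp
  also have "\<dots> = (\<Sum>p\<in>D. card (Aset E (fst p) (snd p)))"
    unfolding card_eq_sum Aset_def by (intro sum.cong refl) (auto intro: arg_cong[where f="sum _"])
  finally have cP: "real (card (P5 E)) = (\<Sum>p\<in>D. real (card (Aset E (fst p) (snd p))))"
    by simp
  also have "\<dots> = (\<Sum>p\<in>D. (\<lambda>(s,t). g2 V E s t) p)"
    by (intro sum.cong refl) (auto simp: D_def real_card_A[OF T])
  also have "\<dots> = (\<Sum>e\<in>E. \<Sum>p\<in>{p \<in> D. (\<lambda>(s,t). {s,t}) p = e}. (\<lambda>(s,t). g2 V E s t) p)"
  proof (rule sum.group[symmetric, OF finD])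
    show "finite E"
    proof -
      have "E \<subseteq> Pow V"
      proof
        fix e assume "e \<in> E"
        then obtain u v where "u \<in> V" "v \<in> V" "e = {u,v}" using sg unfolding simple_graph_def by blast
        then show "e \<in> Pow V" by simp
      qed
      moreover have "finite (Pow V)" using sg by (simp add: simple_graph_def)
      ultimately show ?thesis by (rule finite_subset)
    qed
    show "(\<lambda>(s,t). {s,t}) ` D \<subseteq> E" unfolding D_def by auto
  qed
  also have "\<dots> = (\<Sum>e\<in>E. \<Sum>(s, t)\<in>{(s, t). e = {s, t}}. g2 V E s t)"
  proof (rule sum.cong[OF refl])
    fix e assume "e \<in> E"
    then show "(\<Sum>p\<in>{p \<in> D. (\<lambda>(s,t). {s,t}) p = e}. (\<lambda>(s,t). g2 V E s t) p) =
       (\<Sum>(s, t)\<in>{(s, t). e = {s, t}}. g2 V E s t)"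
      unfolding D_def by (intro sum.cong) auto
  qed
  finally have "real (card (P5 E)) = (\<Sum>e\<in>E. \<Sum>(s, t)\<in>{(s, t). e = {s, t}}. g2 V E s t)" .
  then show ?thesis unfolding n using card_P5_es[OF sg] by simp
qed

end
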